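(* Let $(X,Y)$ be random variables with values in $[0,1]$ and let $0\le a\le b\le 1$. If $P\big((X-a)(Y-b)<0\big)=1$ and $P(Y>b)>0$, then the distribution of $(X,Y)$ is not coherent.
   Context: A distribution of $(X,Y)$ on $[0,1]^2$ is coherent if there exist, on some probability space, random variables with that joint distribution and an event $A$ such that $X=P(A\mid X)$ and $Y=P(A\mid Y)$. *)

theory Defs
  imports "HOL-Probability.Probability"
begin

definition cond_prob_given :: "'b measure \<Rightarrow> 'b set \<Rightarrow> ('b \<Rightarrow> real) \<Rightarrow> 'b \<Rightarrow> real" where
  "cond_prob_given N A Z = real_cond_exp N (vimage_algebra (space N) Z borel) (indicator A)"

definition coherent :: "'b itself \<Rightarrow> (real \<times> real) measure \<Rightarrow> bool" where
  "coherent _ \<mu> = (\<exists>(N::'b measure) X Y A.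
      prob_space N \<and> X \<in> borel_measurable N \<and> Y \<in> borel_measurable N \<and> A \<in> sets N \<and>
      distr N borel (\<lambda>\<omega>. (X \<omega>, Y \<omega>)) = \<mu> \<and>
      (AE \<omega> in N. X \<omega> = cond_prob_given N A X \<omega>) \<and>
      (AE \<omega> in N. Y \<omega> = cond_prob_given N A Y \<omega>))"

end

theory Submission
  imports Defs
begin

lemma key_cp:
  assumes N: "prob_space N" and Zm: "Z \<in> borel_measurable N" and A: "A \<in> sets N"
    and ae: "AE \<omega> in N. Z \<omega> = cond_prob_given N A Z \<omega>" and S: "S \<in> sets borel"
  shows "integrable N Z"
    and "(\<integral>\<omega>. indicator (Z -` S \<inter> space N) \<omega> * Z \<omega> \<partial>N) = measure N (A \<inter> (Z -` S \<inter> space N))"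
proof -
  interpret prob_space N by (rule N)
  let ?F = "vimage_algebra (space N) Z borel"
  have sub: "subalgebra N ?F"
    unfolding subalgebra_def using sets_image_in_sets[OF refl Zm] by simp
  interpret fs: finite_measure_subalgebra N ?F
    by unfold_locales (rule sub)
  have intA: "integrable N (indicator A :: 'a \<Rightarrow> real)"
    by (intro integrable_real_indicator A) (simp add: less_top[symmetric])
  have ic: "integrable N (real_cond_exp N ?F (indicator A))"
    using fs.real_cond_exp_int(1)[OF intA] .
  show intZ: "integrable N Z"
    using ae unfolding cond_prob_given_def
    by (intro integrable_cong_AE_imp[OF ic Zm]) (rule AE_mp[OF ae[unfolded cond_prob_given_def]], auto)
  let ?B = "Z -` S \<inter> space N"
  have B: "?B \<in> sets ?F" using S by (rule in_vimage_algebra)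
  have BN: "?B \<in> sets N" using Zm S by measurable
  have "(\<integral>\<omega>\<in>?B. indicator A \<omega> \<partial>N) = (\<integral>\<omega>\<in>?B. real_cond_exp N ?F (indicator A) \<omega> \<partial>N)"
    by (rule fs.real_cond_exp_intA[OF intA B])
  moreover have "(\<integral>\<omega>\<in>?B. indicator A \<omega> \<partial>N) = measure N (A \<inter> ?B)"
    unfolding set_lebesgue_integral_def
    using sets.sets_into_space[OF A]
    by (simp add: indicator_inter_arith[symmetric] A BN Int_commute) (metis Int_absorb1 Int_assoc Int_commute le_infI2)
  moreover have "(\<integral>\<omega>\<in>?B. real_cond_exp N ?F (indicator A) \<omega> \<partial>N) = (\<integral>\<omega>. indicator ?B \<omega> * Z \<omega> \<partial>N)"
    unfolding set_lebesgue_integral_def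
    apply (rule integral_cong_AE)
      apply (intro borel_measurable_scaleR borel_measurable_indicator BN borel_measurable_integrable[OF ic])
     apply (intro borel_measurable_times borel_measurable_indicator BN Zm)
    by (rule AE_mp[OF ae[unfolded cond_prob_given_def]], auto)
  ultimately show "(\<integral>\<omega>. indicator ?B \<omega> * Z \<omega> \<partial>N) = measure N (A \<inter> ?B)" by simp
qed


theorem corollary2p2:
  fixes M :: "'a measure" and X Y :: "'a \<Rightarrow> real" and a b :: real
  assumes "prob_space M"
    and "X \<in> borel_measurable M" and "Y \<in> borel_measurable M"
    and "\<And>\<omega>. \<omega> \<in> space M \<Longrightarrow> X \<omega> \<in> {0..1}"
    and "\<And>\<omega>. \<omega> \<in> space M \<Longrightarrow> Y \<omega> \<in> {0..1}"
    and "0 \<le> a" and "a \<le> b" and "b \<le> 1"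
    and "measure M {\<omega> \<in> space M. (X \<omega> - a) * (Y \<omega> - b) < 0} = 1"
    and "measure M {\<omega> \<in> space M. Y \<omega> > b} > 0"
  shows "\<not> coherent TYPE('b) (distr M borel (\<lambda>\<omega>. (X \<omega>, Y \<omega>)))"
proof
  assume "coherent TYPE('b) (distr M borel (\<lambda>\<omega>. (X \<omega>, Y \<omega>)))"
  then obtain N :: "'b measure" and X' Y' A where N: "prob_space N"
    and Xm: "X' \<in> borel_measurable N" and Ym: "Y' \<in> borel_measurable N" and A: "A \<in> sets N"
    and D: "distr N borel (\<lambda>\<omega>. (X' \<omega>, Y' \<omega>)) = distr M borel (\<lambda>\<omega>. (X \<omega>, Y \<omega>))"
    and aeX: "AE \<omega> in N. X' \<omega> = cond_prob_given N A X' \<omega>"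
    and aeY: "AE \<omega> in N. Y' \<omega> = cond_prob_given N A Y' \<omega>"
    unfolding coherent_def by blast
  interpret N: prob_space N by (rule N)
  have pm: "(\<lambda>\<omega>. (X \<omega>, Y \<omega>)) \<in> borel_measurable M"
    using assms(2,3) by (intro borel_measurable_Pair)
  have pN: "(\<lambda>\<omega>. (X' \<omega>, Y' \<omega>)) \<in> borel_measurable N"
    using Xm Ym by (intro borel_measurable_Pair)
  have transfer: "measure N ((\<lambda>\<omega>. (X' \<omega>, Y' \<omega>)) -` S \<inter> space N)
      = measure M ((\<lambda>\<omega>. (X \<omega>, Y \<omega>)) -` S \<inter> space M)" if S: "S \<in> sets borel" for S
    using measure_distr[OF pN S] measure_distr[OF pm S] D by simp
  have S1: "{p::real\<times>real. (fst p - a)*(snd p - b) < 0} \<in> sets borel"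
    by (intro borel_open open_Collect_less continuous_intros)
  have S2: "{p::real\<times>real. b < snd p} \<in> sets borel"
    by (intro borel_open open_Collect_less continuous_intros)
  have m1: "measure N {\<omega> \<in> space N. (X' \<omega> - a) * (Y' \<omega> - b) < 0} = 1"
    using transfer[OF S1] assms(9) by (simp add: vimage_def Int_def conj_commute)
  have m2: "measure N {\<omega> \<in> space N. Y' \<omega> > b} > 0"
    using transfer[OF S2] assms(10) by (simp add: vimage_def Int_def conj_commute)
  have ae1: "AE \<omega> in N. (X' \<omega> - a) * (Y' \<omega> - b) < 0"
    using N.AE_prob_1[OF m1] by (auto elim!: AE_mp intro!: AE_I2)
  define E where "E = Y' -` {b<..} \<inter> space N"
  define F where "F = X' -` {..<a} \<inter> space N"
  have EN: "E \<in> sets N" unfolding E_def using Ym by measurable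
  have FN: "F \<in> sets N" unfolding F_def using Xm by measurable
  have EF: "AE \<omega> in N. (\<omega> \<in> E) = (\<omega> \<in> F)"
    unfolding E_def F_def
    by (rule AE_mp[OF ae1], rule AE_I2) (auto simp: mult_less_0_iff)
  have EX: "AE \<omega> in N. \<omega> \<in> E \<longrightarrow> X' \<omega> < a"
    unfolding E_def
    by (rule AE_mp[OF ae1], rule AE_I2) (auto simp: mult_less_0_iff)
  have intX: "integrable N X'" and kX: "(\<integral>\<omega>. indicator F \<omega> * X' \<omega> \<partial>N) = measure N (A \<inter> F)"
    using key_cp[OF N Xm A aeX, of "{..<a}"] unfolding F_def by auto
  have intY: "integrable N Y'" and kY: "(\<integral>\<omega>. indicator E \<omega> * Y' \<omega> \<partial>N) = measure N (A \<inter> E)"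
    using key_cp[OF N Ym A aeY, of "{b<..}"] unfolding E_def by auto
  have mAE: "measure N (A \<inter> F) = measure N (A \<inter> E)"
    unfolding measure_def using A EN FN
    apply (intro arg_cong[where f=enn2real] emeasure_eq_AE)
      apply (rule AE_mp[OF EF], rule AE_I2)
    by auto
  have iFE: "(\<integral>\<omega>. indicator F \<omega> * X' \<omega> \<partial>N) = (\<integral>\<omega>. indicator E \<omega> * X' \<omega> \<partial>N)"
    apply (rule integral_cong_AE)
      apply (intro borel_measurable_times borel_measurable_indicator FN Xm)
     apply (intro borel_measurable_times borel_measurable_indicator EN Xm)
    apply (rule AE_mp[OF EF], rule AE_I2)
    apply (simp add: indicator_def)
    done
  have iE: "integrable N (\<lambda>\<omega>. indicator E \<omega> * Y' \<omega>)" "integrable N (\<lambda>\<omega>. indicator E \<omega> * X' \<omega>)"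
    using integrable_mult_indicator[OF EN intY] integrable_mult_indicator[OF EN intX] by auto
  have z: "(\<integral>\<omega>. indicator E \<omega> * (Y' \<omega> - X' \<omega>) \<partial>N) = 0"
    using Bochner_Integration.integral_diff[OF iE] kX kY mAE iFE by (simp add: right_diff_distrib)
  have nn: "AE \<omega> in N. 0 \<le> indicator E \<omega> * (Y' \<omega> - X' \<omega>)"
    by (rule AE_mp[OF EX], rule AE_I2) (use assms(7) in \<open>auto simp: indicator_def E_def\<close>)
  have iD: "integrable N (\<lambda>\<omega>. indicator E \<omega> * (Y' \<omega> - X' \<omega>))"
    using Bochner_Integration.integrable_diff[OF iE] by (simp add: right_diff_distrib)
  have ae0: "AE \<omega> in N. indicator E \<omega> * (Y' \<omega> - X' \<omega>) = 0"
    using integral_nonneg_eq_0_iff_AE[OF iD nn] z by simp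
  have "AE \<omega> in N. \<omega> \<notin> E"
    by (rule AE_mp[OF EX], rule AE_mp[OF ae0], rule AE_I2) (use assms(7) in \<open>auto simp: indicator_def E_def\<close>)
  then have "measure N E = 0"
  proof -
    have "{x \<in> space N. \<not> x \<notin> E} = E" using sets.sets_into_space[OF EN] by auto
    from AE_iff_measurable[OF EN this] \<open>AE \<omega> in N. \<omega> \<notin> E\<close> show ?thesis
      by (simp add: measure_def)
  qed
  moreover have "E = {\<omega> \<in> space N. Y' \<omega> > b}" unfolding E_def by auto
  ultimately show False using m2 by simp
qed

end
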